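(* Let $a,n\in\mathbb{N}$, $k_1,\ldots,k_n\in\mathbb{N}$, let $f_1,\ldots,f_n$, $g_1,\ldots,g_n$, $h_1,\ldots,h_n$ be arbitrary arithmetic functions, and let $\omega$ be a completely additive function. Writing in each summand $M=\operatorname{lcm}(d_1,\ldots,d_n)$ and $L=K/M$, we have $$U_{\omega}^{(a)}(k_1,\ldots,k_n)=\sum_{d_1|k_1,\ldots,d_n|k_n}\omega(M^a)\Bigl(\prod_{i=1}^n f_i(d_i)g_i\Bigl(\frac{k_i}{d_i}\Bigr)\Bigr)\sum_{\ell=1}^{L^a}\prod_{i=1}^n h_i\Bigl(\Bigl(\frac{M}{d_i}\Bigr)^a\ell\Bigr)+\sum_{d_1|k_1,\ldots,d_n|k_n}\Bigl(\prod_{i=1}^n f_i(d_i)g_i\Bigl(\frac{k_i}{d_i}\Bigr)\Bigr)\sum_{\ell=1}^{L^a}\omega(\ell)\prod_{i=1}^n h_i\Bigl(\Bigl(\frac{M}{d_i}\Bigr)^a\ell\Bigr).$$ If in addition $h_1,\ldots,h_n$ are completely multiplicative, then $$U_{\omega}^{(a)}(k_1,\ldots,k_n)=\sum_{d_1|k_1,\ldots,d_n|k_n}\omega(M^a)\Bigl(\prod_{i=1}^n f_i(d_i)g_i\Bigl(\frac{k_i}{d_i}\Bigr)h_i\Bigl(\frac{M}{d_i}\Bigr)^a\Bigr)\sum_{\ell=1}^{L^a}\prod_{i=1}^n h_i(\ell)+\sum_{d_1|k_1,\ldots,d_n|k_n}\Bigl(\prod_{i=1}^n f_i(d_i)g_i\Bigl(\frac{k_i}{d_i}\Bigr)h_i\Bigl(\frac{M}{d_i}\Bigr)^a\Bigr)\sum_{\ell=1}^{L^a}\omega(\ell)\prod_{i=1}^n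 h_i(\ell).$$
   Context: An arithmetic function is a map $\mathbb{N}\to\mathbb{C}$. $\omega$ is completely additive if $\omega(mn)=\omega(m)+\omega(n)$ for all $m,n\in\mathbb{N}$; $h$ is completely multiplicative if $h(1)=1$ and $h(mn)=h(m)h(n)$ for all $m,n$. For $a\in\mathbb{N}$ and arithmetic functions $f,g,h$, $s^{(a)}_{f,g,h}(k,j)=\sum_{d|k,\ d^a|j} f(d)\,g(k/d)\,h(j/d^a)$ for $k,j\in\mathbb{N}$. Given $k_1,\ldots,k_n$, $K=\operatorname{lcm}(k_1,\ldots,k_n)$ and $U_{\omega}^{(a)}(k_1,\ldots,k_n)=\sum_{j=1}^{K^a}\omega(j)\prod_{i=1}^n s^{(a)}_{f_i,g_i,h_i}(k_i,j)$. *)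

theory Defs
  imports Complex_Main "HOL-Library.FuncSet"
begin

text \<open>Arithmetic functions are modelled as maps nat \<Rightarrow> complex; only
  their values at positive arguments matter.\<close>

definition completely_additive :: "(nat \<Rightarrow> complex) \<Rightarrow> bool" where
  "completely_additive w \<longleftrightarrow> (\<forall>m n. m > 0 \<longrightarrow> n > 0 \<longrightarrow> w (m * n) = w m + w n)"

definition completely_multiplicative :: "(nat \<Rightarrow> complex) \<Rightarrow> bool" where
  "completely_multiplicative h \<longleftrightarrow> h 1 = 1 \<and>
     (\<forall>m n. m > 0 \<longrightarrow> n > 0 \<longrightarrow> h (m * n) = h m * h n)"

definition s_fun :: "nat \<Rightarrow> (nat \<Rightarrow> complex) \<Rightarrow> (nat \<Rightarrow> complex) \<Rightarrow> (nat \<Rightarrow> complex)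
    \<Rightarrow> nat \<Rightarrow> nat \<Rightarrow> complex" where
  "s_fun a f g h k j = (\<Sum>d \<in> {d. d dvd k \<and> d ^ a dvd j}. f d * g (k div d) * h (j div d ^ a))"

definition U_fun :: "nat \<Rightarrow> (nat \<Rightarrow> complex) \<Rightarrow> (nat \<Rightarrow> nat \<Rightarrow> complex) \<Rightarrow> (nat \<Rightarrow> nat \<Rightarrow> complex)
    \<Rightarrow> (nat \<Rightarrow> nat \<Rightarrow> complex) \<Rightarrow> nat \<Rightarrow> (nat \<Rightarrow> nat) \<Rightarrow> complex" where
  "U_fun a w f g h n k =
     (\<Sum>j = 1..(Lcm (k ` {1..n})) ^ a. w j * (\<Prod>i = 1..n. s_fun a (f i) (g i) (h i) (k i) j))"

end

theory Submission
  imports Defs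
begin

lemma lcm_pow_nat: "(lcm (x::nat) y)^a = lcm (x^a) (y^a)"
proof (cases "gcd x y = 0")
  case True then show ?thesis by (cases a) auto
next
  case False
  have e1: "lcm (x^a) (y^a) * gcd x y ^ a = x^a*y^a" using lcm_gcd_prod[of "x^a" "y^a"] by simp
  have e2: "lcm x y ^a * gcd x y ^ a = x^a*y^a" using lcm_gcd_prod[of x y]
    by (simp add: power_mult_distrib[symmetric])
  from e1 e2 have "lcm (x^a) (y^a) * gcd x y ^ a = lcm x y ^a * gcd x y ^ a" by simp
  moreover have "gcd x y ^ a \<noteq> 0" using False by auto
  ultimately show ?thesis by (metis mult_right_cancel)
qed

lemma Lcm_pow_nat: "finite A \<Longrightarrow> (Lcm (A::nat set))^a = Lcm ((\<lambda>x. x^a) ` A)"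
  by (induction A rule: finite_induct) (auto simp: lcm_pow_nat)

lemma all_pow_dvd_iff:
  "finite I \<Longrightarrow> (\<forall>i\<in>I. (d i::nat)^a dvd j) \<longleftrightarrow> (Lcm (d ` I))^a dvd j"
  by (simp add: Lcm_pow_nat Lcm_dvd_iff image_image)

lemma reindex_dvd:
  fixes G :: "nat \<Rightarrow> 'b::comm_monoid_add"
  assumes "m > 0" "m dvd N"
  shows "(\<Sum>j=1..N. if m dvd j then G j else 0) = (\<Sum>l=1..N div m. G (m*l))"
proof -
  have "(\<Sum>j=1..N. if m dvd j then G j else 0) = (\<Sum>j\<in>{j\<in>{1..N}. m dvd j}. G j)"
    by (rule sum.inter_filter[symmetric]) simp
  also have "{j\<in>{1..N}. m dvd j} = (\<lambda>l. m*l) ` {1..N div m}"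
  proof
    show "{j \<in> {1..N}. m dvd j} \<subseteq> (*) m ` {1..N div m}"
    proof
      fix j assume j: "j \<in> {j \<in> {1..N}. m dvd j}"
      then obtain l where l: "j = m*l" by auto
      have "l \<ge> 1" using j l by (cases l) auto
      moreover have "l \<le> N div m" using j l assms
        by (metis (no_types, lifting) dvd_div_mult_self atLeastAtMost_iff mem_Collect_eq mult.commute mult_le_cancel1)
      ultimately show "j \<in> (*) m ` {1..N div m}" using l by auto
    qed
    show "(*) m ` {1..N div m} \<subseteq> {j \<in> {1..N}. m dvd j}"
    proof
      fix j assume "j \<in> (*) m ` {1..N div m}"
      then obtain l where l0: "l \<in> {1..N div m}" "j = m*l" by blast
      then have l: "j = m*l" "1 \<le> l" "l \<le> N div m" by auto
      have "m*l \<le> m * (N div m)" using l by simp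
      also have "\<dots> = N" using assms by simp
      finally show "j \<in> {j \<in> {1..N}. m dvd j}" using l assms by auto
    qed
  qed
  also have "(\<Sum>j\<in>(\<lambda>l. m*l) ` {1..N div m}. G j) = (\<Sum>l=1..N div m. G (m*l))"
    using assms by (subst sum.reindex) (auto simp: inj_on_def)
  finally show ?thesis .
qed

lemma prod_if_zero:
  fixes x :: "'i \<Rightarrow> 'b::comm_semiring_1"
  assumes "finite I"
  shows "(\<Prod>i\<in>I. if c i then x i else 0) = (if (\<forall>i\<in>I. c i) then (\<Prod>i\<in>I. x i) else 0)"
proof (cases "\<forall>i\<in>I. c i")
  case True then show ?thesis by (auto intro: prod.cong)
next
  case False then obtain i where "i\<in>I" "\<not> c i" by auto
  then show ?thesis using assms False by (auto intro!: prod_zero)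
qed

theorem theorem2:
  fixes a n :: nat and k :: "nat \<Rightarrow> nat"
    and f g h :: "nat \<Rightarrow> nat \<Rightarrow> complex" and w :: "nat \<Rightarrow> complex"
  assumes "a \<ge> 1" and "n \<ge> 1"
    and "\<forall>i \<in> {1..n}. k i \<ge> 1"
    and "completely_additive w"
  shows "(U_fun a w f g h n k =
      (\<Sum>d \<in> (\<Pi>\<^sub>E i\<in>{1..n}. {e. e dvd k i}).
          w ((Lcm (d ` {1..n})) ^ a)
          * (\<Prod>i = 1..n. f i (d i) * g i (k i div d i))
          * (\<Sum>l = 1..(Lcm (k ` {1..n}) div Lcm (d ` {1..n})) ^ a.
               \<Prod>i = 1..n. h i ((Lcm (d ` {1..n}) div d i) ^ a * l)))
    + (\<Sum>d \<in> (\<Pi>\<^sub>E i\<in>{1..n}. {e. e dvd k i}).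
          (\<Prod>i = 1..n. f i (d i) * g i (k i div d i))
          * (\<Sum>l = 1..(Lcm (k ` {1..n}) div Lcm (d ` {1..n})) ^ a.
               w l * (\<Prod>i = 1..n. h i ((Lcm (d ` {1..n}) div d i) ^ a * l)))))
    \<and> ((\<forall>i \<in> {1..n}. completely_multiplicative (h i)) \<longrightarrow>
      U_fun a w f g h n k =
      (\<Sum>d \<in> (\<Pi>\<^sub>E i\<in>{1..n}. {e. e dvd k i}).
          w ((Lcm (d ` {1..n})) ^ a)
          * (\<Prod>i = 1..n. f i (d i) * g i (k i div d i) * (h i (Lcm (d ` {1..n}) div d i)) ^ a)
          * (\<Sum>l = 1..(Lcm (k ` {1..n}) div Lcm (d ` {1..n})) ^ a.
               \<Prod>i = 1..n. h i l))
    + (\<Sum>d \<in> (\<Pi>\<^sub>E i\<in>{1..n}. {e. e dvd k i}).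
          (\<Prod>i = 1..n. f i (d i) * g i (k i div d i) * (h i (Lcm (d ` {1..n}) div d i)) ^ a)
          * (\<Sum>l = 1..(Lcm (k ` {1..n}) div Lcm (d ` {1..n})) ^ a.
               w l * (\<Prod>i = 1..n. h i l))))"
proof -
  define I where "I = {1..n}"
  define A where "A i = {e. e dvd k i}" for i
  define K where "K = Lcm (k ` I)"
  define M where "M d = Lcm (d ` I)" for d :: "nat \<Rightarrow> nat"
  define P where "P d = (\<Prod>i\<in>I. f i (d i) * g i (k i div d i))" for d
  define H where "H d l = (\<Prod>i\<in>I. h i ((M d div d i)^a * l))" for d l
  have finI: "finite I" unfolding I_def by simp
  have kpos: "i \<in> I \<Longrightarrow> k i > 0" for i using assms(3) unfolding I_def by force
  have finA: "finite (A i)" if "i \<in> I" for i unfolding A_def using kpos[OF that] by simp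
  have finPi: "finite (PiE I A)" using finI finA by (simp add: finite_PiE)
  have Kpos: "K > 0" unfolding K_def using finI kpos
    by (metis Lcm_0_iff finite_imageI gr0I image_iff)
  have dpos: "d i > 0" if "d \<in> PiE I A" "i \<in> I" for d i
  proof -
    have "d i dvd k i" using that unfolding A_def by (auto simp: PiE_iff)
    then show ?thesis using kpos[OF that(2)] by (metis dvd_0_left_iff gr0I less_not_refl2)
  qed
  have Mpos: "M d > 0" if "d \<in> PiE I A" for d unfolding M_def using finI dpos[OF that]
    by (metis Lcm_0_iff finite_imageI gr0I image_iff)
  have MK: "M d dvd K" if "d \<in> PiE I A" for d
    unfolding M_def K_def
  proof (rule Lcm_least)
    fix x assume "x \<in> d ` I"
    then obtain i where "i \<in> I" "x = d i" by auto
    then have "x dvd k i" using that unfolding A_def by auto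
    also have "k i dvd Lcm (k ` I)" using \<open>i\<in>I\<close> by (simp add: dvd_Lcm)
    finally show "x dvd Lcm (k ` I)" .
  qed
  have dM: "d i dvd M d" if "i \<in> I" for d i unfolding M_def using that by (simp add: dvd_Lcm)
  have Kdiv: "K^a div (M d)^a = (K div M d)^a" if "d \<in> PiE I A" for d
    using div_power[OF MK[OF that]] by simp
  have sexp: "s_fun a (f i) (g i) (h i) (k i) j =
      (\<Sum>e\<in>A i. if e^a dvd j then f i e * g i (k i div e) * h i (j div e^a) else 0)"
    if "i \<in> I" for i j
    unfolding s_fun_def A_def
    using sum.inter_filter[OF finA[OF that], of "\<lambda>e. f i e * g i (k i div e) * h i (j div e^a)"
       "\<lambda>e. e^a dvd j", symmetric] unfolding A_def by simp
  have key: "U_fun a w f g h n k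
      = (\<Sum>d\<in>PiE I A. \<Sum>l=1..(K div M d)^a. w ((M d)^a * l) * P d * H d l)"
  proof -
    have "U_fun a w f g h n k = (\<Sum>j=1..K^a. w j * (\<Prod>i\<in>I.
         (\<Sum>e\<in>A i. if e^a dvd j then f i e * g i (k i div e) * h i (j div e^a) else 0)))"
      unfolding U_fun_def K_def I_def[symmetric] using sexp by (simp cong: prod.cong)
    also have "\<dots> = (\<Sum>j=1..K^a. w j * (\<Sum>d\<in>PiE I A. \<Prod>i\<in>I.
         (if (d i)^a dvd j then f i (d i) * g i (k i div d i) * h i (j div (d i)^a) else 0)))"
      by (simp add: prod_sum_PiE[OF finI finA])
    also have "\<dots> = (\<Sum>j=1..K^a. \<Sum>d\<in>PiE I A.
         (if (M d)^a dvd j then w j * P d * (\<Prod>i\<in>I. h i (j div (d i)^a)) else 0))"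
    proof (rule sum.cong[OF refl])
      fix j
      show "w j * (\<Sum>d\<in>PiE I A. \<Prod>i\<in>I.
         (if (d i)^a dvd j then f i (d i) * g i (k i div d i) * h i (j div (d i)^a) else 0)) =
         (\<Sum>d\<in>PiE I A.
         (if (M d)^a dvd j then w j * P d * (\<Prod>i\<in>I. h i (j div (d i)^a)) else 0))"
        unfolding sum_distrib_left
      proof (rule sum.cong[OF refl])
        fix d
        show "w j * (\<Prod>i\<in>I.
         (if (d i)^a dvd j then f i (d i) * g i (k i div d i) * h i (j div (d i)^a) else 0)) =
         (if (M d)^a dvd j then w j * P d * (\<Prod>i\<in>I. h i (j div (d i)^a)) else 0)"
          unfolding prod_if_zero[OF finI] all_pow_dvd_iff[OF finI] M_def[symmetric] P_def
          by (simp add: prod.distrib)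
      qed
    qed
    also have "\<dots> = (\<Sum>d\<in>PiE I A. \<Sum>j=1..K^a.
         (if (M d)^a dvd j then w j * P d * (\<Prod>i\<in>I. h i (j div (d i)^a)) else 0))"
      by (rule sum.swap)
    also have "\<dots> = (\<Sum>d\<in>PiE I A. \<Sum>l=1..(K div M d)^a. w ((M d)^a * l) * P d * H d l)"
    proof (rule sum.cong[OF refl])
      fix d assume d: "d \<in> PiE I A"
      have "(\<Sum>j=1..K^a.
         (if (M d)^a dvd j then w j * P d * (\<Prod>i\<in>I. h i (j div (d i)^a)) else 0))
         = (\<Sum>l=1..K^a div (M d)^a. w ((M d)^a * l) * P d * (\<Prod>i\<in>I. h i ((M d)^a * l div (d i)^a)))"
        by (rule reindex_dvd) (use Mpos[OF d] MK[OF d] in \<open>auto intro: dvd_power_same\<close>)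
      also have "\<dots> = (\<Sum>l=1..(K div M d)^a. w ((M d)^a * l) * P d * H d l)"
        unfolding Kdiv[OF d] H_def
      proof (intro sum.cong refl arg_cong2[where f="(*)"] prod.cong)
        fix l i assume i: "i \<in> I"
        obtain q where q: "M d = d i * q" using dM[OF i] by blast
        have "d i ^ a > 0" using dpos[OF d i] by simp
        then show "h i ((M d)^a * l div (d i)^a) = h i ((M d div d i)^a * l)"
          using q dpos[OF d i] by (simp add: power_mult_distrib mult.assoc)
      qed
      finally show "(\<Sum>j=1..K^a.
         (if (M d)^a dvd j then w j * P d * (\<Prod>i\<in>I. h i (j div (d i)^a)) else 0))
         = (\<Sum>l=1..(K div M d)^a. w ((M d)^a * l) * P d * H d l)" .
    qed
    finally show ?thesis .
  qed
  have part1: "U_fun a w f g h n k =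
      (\<Sum>d\<in>PiE I A. w ((M d)^a) * P d * (\<Sum>l=1..(K div M d)^a. H d l))
    + (\<Sum>d\<in>PiE I A. P d * (\<Sum>l=1..(K div M d)^a. w l * H d l))"
  proof -
    have "U_fun a w f g h n k = (\<Sum>d\<in>PiE I A. \<Sum>l=1..(K div M d)^a. 
          w ((M d)^a) * P d * H d l + P d * (w l * H d l))"
      unfolding key
    proof (intro sum.cong refl)
      fix d l assume d: "d \<in> PiE I A" and l: "l \<in> {1..(K div M d)^a}"
      have "w ((M d)^a * l) = w ((M d)^a) + w l"
        using assms(4) Mpos[OF d] l unfolding completely_additive_def by auto
      then show "w ((M d)^a * l) * P d * H d l = w ((M d)^a) * P d * H d l + P d * (w l * H d l)"
        by (simp add: algebra_simps)
    qed
    then show ?thesis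
      by (simp add: sum.distrib sum_distrib_left)
  qed
  have part2: "P d * H d l = (\<Prod>i\<in>I. f i (d i) * g i (k i div d i) * (h i (M d div d i))^a)
        * (\<Prod>i\<in>I. h i l)"
    if cm: "\<forall>i \<in> I. completely_multiplicative (h i)" and d: "d \<in> PiE I A" and l: "l \<ge> 1"
    for d l
  proof -
    have hp: "h i (x^a * l) = h i x ^ a * h i l" if i: "i \<in> I" and x: "x > 0" for i x
    proof -
      have c: "h i 1 = 1" "\<And>m n. m > 0 \<Longrightarrow> n > 0 \<Longrightarrow> h i (m * n) = h i m * h i n"
        using cm i unfolding completely_multiplicative_def I_def by auto
      have "h i (x^b) = h i x ^ b" for b
        by (induction b) (use c x in auto)
      then show ?thesis using c x l by simp
    qed
    have "H d l = (\<Prod>i\<in>I. h i (M d div d i) ^ a * h i l)"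
      unfolding H_def
    proof (rule prod.cong[OF refl])
      fix i assume i: "i \<in> I"
      have "M d div d i > 0" using dM[OF i] Mpos[OF d] dpos[OF d i]
        by (metis dvd_div_eq_0_iff gr0I less_not_refl2)
      then show "h i ((M d div d i)^a * l) = h i (M d div d i) ^ a * h i l" using hp[OF i] by simp
    qed
    then show ?thesis unfolding P_def by (simp add: prod.distrib mult_ac)
  qed
  show ?thesis
    unfolding I_def[symmetric] unfolding K_def[symmetric] unfolding M_def[symmetric] A_def[symmetric]
  proof (intro conjI impI)
    show "U_fun a w f g h n k =
      (\<Sum>d\<in>PiE I A. w ((M d)^a) * (\<Prod>i\<in>I. f i (d i) * g i (k i div d i)) * (\<Sum>l=1..(K div M d)^a. \<Prod>i\<in>I. h i ((M d div d i)^a * l)))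
    + (\<Sum>d\<in>PiE I A. (\<Prod>i\<in>I. f i (d i) * g i (k i div d i)) * (\<Sum>l=1..(K div M d)^a. w l * (\<Prod>i\<in>I. h i ((M d div d i)^a * l))))"
      using part1 unfolding P_def H_def .
    assume cm: "\<forall>i \<in> I. completely_multiplicative (h i)"
    have e1: "w ((M d)^a) * P d * (\<Sum>l=1..(K div M d)^a. H d l) =
      w ((M d)^a) * (\<Prod>i\<in>I. f i (d i) * g i (k i div d i) * (h i (M d div d i))^a) * (\<Sum>l=1..(K div M d)^a. \<Prod>i\<in>I. h i l)"
      if d: "d \<in> PiE I A" for d
      using part2[OF cm d] by (simp add: sum_distrib_left mult.assoc)
    have e2: "P d * (\<Sum>l=1..(K div M d)^a. w l * H d l) =
      (\<Prod>i\<in>I. f i (d i) * g i (k i div d i) * (h i (M d div d i))^a) * (\<Sum>l=1..(K div M d)^a. w l * (\<Prod>i\<in>I. h i l))"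
      if d: "d \<in> PiE I A" for d
    proof -
      let ?Q = "(\<Prod>i\<in>I. f i (d i) * g i (k i div d i) * (h i (M d div d i))^a)"
      have "P d * (\<Sum>l=1..(K div M d)^a. w l * H d l) = (\<Sum>l=1..(K div M d)^a. w l * (P d * H d l))"
        by (simp add: sum_distrib_left mult_ac)
      also have "\<dots> = (\<Sum>l=1..(K div M d)^a. w l * (?Q * (\<Prod>i\<in>I. h i l)))"
        by (intro sum.cong refl) (simp add: part2[OF cm d])
      also have "\<dots> = ?Q * (\<Sum>l=1..(K div M d)^a. w l * (\<Prod>i\<in>I. h i l))"
        unfolding sum_distrib_left by (intro sum.cong refl) (simp add: mult_ac)
      finally show ?thesis .
    qed
    show "U_fun a w f g h n k =
      (\<Sum>d\<in>PiE I A. w ((M d)^a) * (\<Prod>i\<in>I. f i (d i) * g i (k i div d i) * (h i (M d div d i))^a) * (\<Sum>l=1..(K div M d)^a. \<Prod>i\<in>I. h i l))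
    + (\<Sum>d\<in>PiE I A. (\<Prod>i\<in>I. f i (d i) * g i (k i div d i) * (h i (M d div d i))^a) * (\<Sum>l=1..(K div M d)^a. w l * (\<Prod>i\<in>I. h i l)))"
      unfolding part1 by (intro arg_cong2[where f="(+)"] sum.cong refl e1 e2)
  qed
qed

end
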